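(* Let $(S,A,P,R,\mu,\gamma)$ be a Markov decision process with discount factor $\gamma\in(0,1)$ and rewards bounded with $R_{\max}=\max_{s,a}R(s,a)$. Let $\pi_{\text{human}}$ and $\pi_{\text{AV}}$ be policies, let $\mathcal{T}:S\to\{0,1\}$ be a switch function, and define the mixed behavior policy $\pi_{\text{mix}}(\cdot\mid s)=\mathcal{T}(s)\,\pi_{\text{human}}(\cdot\mid s)+(1-\mathcal{T}(s))\,\pi_{\text{AV}}(\cdot\mid s)$. Assume $\mathbb{E}_{s\sim d_{\pi_{\text{mix}}}}\|\pi_{\text{human}}(\cdot\mid s)-\pi_{\text{AV}}(\cdot\mid s)\|_1>0$ and let $$\beta=\frac{\mathbb{E}_{s\sim d_{\pi_{\text{mix}}}}\left\|\mathcal{T}(s)\left[\pi_{\text{human}}(\cdot\mid s)-\pi_{\text{AV}}(\cdot\mid s)\right]\right\|_1}{\mathbb{E}_{s\sim d_{\pi_{\text{mix}}}}\|\pi_{\text{human}}(\cdot\mid s)-\pi_{\text{AV}}(\cdot\mid s)\|_1}.$$ Let $\pi^*_{\text{AV}}$ be an optimal policy, i.e. one maximizing $J$. Then $$\left|J(\pi^*_{\text{AV}})-J(\pi_{\text{AV}})\right|\le \frac{\beta R_{\max}}{(1-\gamma)^2}\,\mathbb{E}_{s\sim d_{\pi_{\text{mix}}}}\|\pi_{\text{human}}(\cdot\mid s)-\pi_{\text{AV}}(\cdot\mid s)\|_1+\left|J(\pi^*_{\text{AV}})-J(\pi_{\text{mix}})\right|.$$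
   Context: For a policy $\pi$, $J(\pi)=\mathbb{E}_{\tau\sim\pi}\left[\sum_{t=0}^\infty\gamma^t R(s_t,a_t)\right]$ where $s_0\sim\mu$, $a_t\sim\pi(\cdot\mid s_t)$, $s_{t+1}\sim P(\cdot\mid s_t,a_t)$. $d_\pi$ denotes the normalized discounted state visitation distribution $d_\pi(s)=(1-\gamma)\sum_{t\ge0}\gamma^t\Pr(s_t=s)$ under $\pi$. $\|\cdot\|_1$ is the $\ell_1$ norm on distributions over actions. *)

theory Defs
  imports "HOL-Analysis.Analysis"
begin

text \<open>Finite MDP with state type 's and action type 'a (both finite).
  A (stationary, stochastic, Markov) policy is p s a = probability of action a in state s.\<close>

definition is_distribution :: "('x::finite \<Rightarrow> real) \<Rightarrow> bool" where
  "is_distribution p \<longleftrightarrow> (\<forall>x. 0 \<le> p x) \<and> (\<Sum>x\<in>UNIV. p x) = 1"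

definition is_policy :: "('s::finite \<Rightarrow> 'a::finite \<Rightarrow> real) \<Rightarrow> bool" where
  "is_policy p \<longleftrightarrow> (\<forall>s. is_distribution (p s))"

definition is_transition :: "('s::finite \<Rightarrow> 'a::finite \<Rightarrow> 's \<Rightarrow> real) \<Rightarrow> bool" where
  "is_transition P \<longleftrightarrow> (\<forall>s a. is_distribution (P s a))"

primrec state_dist ::
  "('s::finite \<Rightarrow> 'a::finite \<Rightarrow> 's \<Rightarrow> real) \<Rightarrow> ('s \<Rightarrow> real) \<Rightarrow> ('s \<Rightarrow> 'a \<Rightarrow> real) \<Rightarrow> nat \<Rightarrow> 's \<Rightarrow> real"
where
  "state_dist P mu p 0 = mu"
| "state_dist P mu p (Suc t) =
     (\<lambda>s'. \<Sum>s\<in>UNIV. state_dist P mu p t s * (\<Sum>a\<in>UNIV. p s a * P s a s'))"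

definition J ::
  "('s::finite \<Rightarrow> 'a::finite \<Rightarrow> 's \<Rightarrow> real) \<Rightarrow> ('s \<Rightarrow> real) \<Rightarrow> ('s \<Rightarrow> 'a \<Rightarrow> real) \<Rightarrow> real
   \<Rightarrow> ('s \<Rightarrow> 'a \<Rightarrow> real) \<Rightarrow> real"
where
  "J P mu R \<gamma> p = (\<Sum>t. \<gamma> ^ t * (\<Sum>s\<in>UNIV. state_dist P mu p t s * (\<Sum>a\<in>UNIV. p s a * R s a)))"

definition visit ::
  "('s::finite \<Rightarrow> 'a::finite \<Rightarrow> 's \<Rightarrow> real) \<Rightarrow> ('s \<Rightarrow> real) \<Rightarrow> real \<Rightarrow> ('s \<Rightarrow> 'a \<Rightarrow> real) \<Rightarrow> 's \<Rightarrow> real"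
where
  "visit P mu \<gamma> p s = (1 - \<gamma>) * (\<Sum>t. \<gamma> ^ t * state_dist P mu p t s)"

definition Rmax :: "('s::finite \<Rightarrow> 'a::finite \<Rightarrow> real) \<Rightarrow> real" where
  "Rmax R = Max {\<bar>R s a\<bar> | s a. True}"

definition mix_policy ::
  "('s \<Rightarrow> real) \<Rightarrow> ('s \<Rightarrow> 'a \<Rightarrow> real) \<Rightarrow> ('s \<Rightarrow> 'a \<Rightarrow> real) \<Rightarrow> 's \<Rightarrow> 'a \<Rightarrow> real" where
  "mix_policy T pih piav = (\<lambda>s a. T s * pih s a + (1 - T s) * piav s a)"

end

theory Submission
  imports Defs
begin


definition dlt :: "'s \<Rightarrow> 's \<Rightarrow> real" where
  "dlt s0 = (\<lambda>s. if s = s0 then 1 else 0)"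

definition stp :: "('s::finite \<Rightarrow> 'a::finite \<Rightarrow> 's \<Rightarrow> real) \<Rightarrow> ('s \<Rightarrow> 'a \<Rightarrow> real) \<Rightarrow> ('s \<Rightarrow> real) \<Rightarrow> 's \<Rightarrow> real" where
  "stp P p mu = (\<lambda>s'. \<Sum>s\<in>UNIV. mu s * (\<Sum>a\<in>UNIV. p s a * P s a s'))"

definition rew :: "('s::finite \<Rightarrow> 'a::finite \<Rightarrow> real) \<Rightarrow> ('s \<Rightarrow> 'a \<Rightarrow> real) \<Rightarrow> 's \<Rightarrow> real" where
  "rew p R s = (\<Sum>a\<in>UNIV. p s a * R s a)"

definition ex :: "('s::finite \<Rightarrow> real) \<Rightarrow> ('s \<Rightarrow> real) \<Rightarrow> real" where
  "ex d f = (\<Sum>s\<in>UNIV. d s * f s)"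

lemma sd_Suc: "state_dist P mu p (Suc t) = stp P p (state_dist P mu p t)"
  by (simp add: stp_def)

lemma sd_Suc': "state_dist P mu p (Suc t) = state_dist P (stp P p mu) p t"
proof (induction t)
  case 0
  then show ?case by (simp add: stp_def)
next
  case (Suc t)
  have "state_dist P mu p (Suc (Suc t)) = stp P p (state_dist P mu p (Suc t))" by (simp only: sd_Suc)
  also have "\<dots> = stp P p (state_dist P (stp P p mu) p t)" using Suc by simp
  also have "\<dots> = state_dist P (stp P p mu) p (Suc t)" by (simp only: sd_Suc)
  finally show ?case .
qed

lemma sd_lin: "state_dist P mu p t s = (\<Sum>s0\<in>UNIV. mu s0 * state_dist P (dlt s0) p t s)"
proof (induction t arbitrary: s)
  case 0
  have "(\<Sum>s0\<in>UNIV. mu s0 * dlt s0 s) = (\<Sum>s0\<in>UNIV. if s = s0 then mu s0 else 0)"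
    by (intro sum.cong) (auto simp: dlt_def)
  then show ?case by simp
next
  case (Suc t)
  have "state_dist P mu p (Suc t) s = (\<Sum>s1\<in>UNIV. state_dist P mu p t s1 * (\<Sum>a\<in>UNIV. p s1 a * P s1 a s))"
    by simp
  also have "\<dots> = (\<Sum>s1\<in>UNIV. (\<Sum>s0\<in>UNIV. mu s0 * state_dist P (dlt s0) p t s1) * (\<Sum>a\<in>UNIV. p s1 a * P s1 a s))"
    using Suc by simp
  also have "\<dots> = (\<Sum>s1\<in>UNIV. \<Sum>s0\<in>UNIV. mu s0 * state_dist P (dlt s0) p t s1 * (\<Sum>a\<in>UNIV. p s1 a * P s1 a s))"
    by (simp only: sum_distrib_right)
  also have "\<dots> = (\<Sum>s0\<in>UNIV. \<Sum>s1\<in>UNIV. mu s0 * state_dist P (dlt s0) p t s1 * (\<Sum>a\<in>UNIV. p s1 a * P s1 a s))"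
    by (rule sum.swap)
  also have "\<dots> = (\<Sum>s0\<in>UNIV. mu s0 * (\<Sum>s1\<in>UNIV. state_dist P (dlt s0) p t s1 * (\<Sum>a\<in>UNIV. p s1 a * P s1 a s)))"
    by (simp only: sum_distrib_left mult.assoc)
  also have "\<dots> = (\<Sum>s0\<in>UNIV. mu s0 * state_dist P (dlt s0) p (Suc t) s)" by simp
  finally show ?case .
qed

lemma dlt_dist: "is_distribution (dlt s0 :: 's::finite \<Rightarrow> real)"
  by (simp add: is_distribution_def dlt_def)

lemma stp_dist:
  assumes "is_transition P" "is_policy p" "is_distribution mu"
  shows "is_distribution (stp P p mu)"
proof -
  have nn: "0 \<le> stp P p mu s'" for s'
    using assms unfolding stp_def is_transition_def is_policy_def is_distribution_def
    by (intro sum_nonneg mult_nonneg_nonneg) auto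
  have "(\<Sum>s'\<in>UNIV. stp P p mu s') = (\<Sum>s\<in>UNIV. mu s * (\<Sum>a\<in>UNIV. p s a * (\<Sum>s'\<in>UNIV. P s a s')))"
  proof -
    have "(\<Sum>s'\<in>UNIV. stp P p mu s') = (\<Sum>s\<in>UNIV. \<Sum>s'\<in>UNIV. mu s * (\<Sum>a\<in>UNIV. p s a * P s a s'))"
      unfolding stp_def by (rule sum.swap)
    also have "\<dots> = (\<Sum>s\<in>UNIV. mu s * (\<Sum>s'\<in>UNIV. \<Sum>a\<in>UNIV. p s a * P s a s'))"
      by (simp only: sum_distrib_left)
    also have "\<dots> = (\<Sum>s\<in>UNIV. mu s * (\<Sum>a\<in>UNIV. \<Sum>s'\<in>UNIV. p s a * P s a s'))"
    proof -
      have sw: "\<And>s. (\<Sum>s'\<in>UNIV. \<Sum>a\<in>UNIV. p s a * P s a s') = (\<Sum>a\<in>UNIV. \<Sum>s'\<in>UNIV. p s a * P s a s')"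
        by (rule sum.swap)
      show ?thesis by (simp only: sw)
    qed
    also have "\<dots> = (\<Sum>s\<in>UNIV. mu s * (\<Sum>a\<in>UNIV. p s a * (\<Sum>s'\<in>UNIV. P s a s')))"
      by (simp only: sum_distrib_left)
    finally show ?thesis .
  qed
  also have "\<dots> = 1"
    using assms unfolding is_transition_def is_policy_def is_distribution_def by simp
  finally show ?thesis using nn by (simp add: is_distribution_def)
qed

lemma sd_dist:
  assumes "is_transition P" "is_policy p" "is_distribution mu"
  shows "is_distribution (state_dist P mu p t)"
proof (induction t)
  case 0
  then show ?case using assms(3) by simp
next
  case (Suc t)
  show ?case by (simp only: sd_Suc) (rule stp_dist[OF assms(1,2) Suc])
qed

lemma ex_bound:
  assumes "is_distribution d" "\<And>s. \<bar>f s\<bar> \<le> B"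
  shows "\<bar>ex d f\<bar> \<le> B"
proof -
  have "\<bar>ex d f\<bar> \<le> (\<Sum>s\<in>UNIV. \<bar>d s * f s\<bar>)" unfolding ex_def by (rule sum_abs)
  also have "\<dots> \<le> (\<Sum>s\<in>UNIV. d s * B)"
    using assms by (intro sum_mono) (auto simp: is_distribution_def abs_mult intro: mult_left_mono)
  also have "\<dots> = B" using assms(1) by (simp add: is_distribution_def sum_distrib_right[symmetric])
  finally show ?thesis .
qed

lemma Rmax_ge: "\<bar>R s a\<bar> \<le> Rmax R"
proof -
  have "{\<bar>R s a\<bar> | s a. True} = (\<lambda>(s,a). \<bar>R s a\<bar>) ` UNIV" by auto
  hence "finite {\<bar>R s a\<bar> | s a. True}" by simp
  thus ?thesis unfolding Rmax_def by (rule Max_ge) auto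
qed

lemma rew_bound: "is_policy p \<Longrightarrow> \<bar>rew p R s\<bar> \<le> Rmax R"
  using ex_bound[of "p s" "R s" "Rmax R"] Rmax_ge[of R s]
  by (simp add: is_policy_def rew_def ex_def Rmax_ge)

lemma geo_summable:
  fixes \<gamma> :: real
  assumes "0 \<le> \<gamma>" "\<gamma> < 1" "\<And>t. \<bar>a t\<bar> \<le> B"
  shows "summable (\<lambda>t. \<gamma>^t * a t)"
proof (rule summable_comparison_test)
  show "\<exists>N. \<forall>n\<ge>N. norm (\<gamma>^n * a n) \<le> B * \<gamma>^n"
  proof (intro exI[of _ 0] allI impI)
    fix n :: nat
    have "\<gamma>^n * \<bar>a n\<bar> \<le> \<gamma>^n * B" using assms by (intro mult_left_mono) auto
    then show "norm (\<gamma>^n * a n) \<le> B * \<gamma>^n" using assms by (simp add: abs_mult mult.commute)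
  qed
  show "summable (\<lambda>n. B * \<gamma>^n)" using assms by (intro summable_mult summable_geometric) auto
qed




lemma J_alt: "J P mu R \<gamma> p = (\<Sum>t. \<gamma>^t * ex (state_dist P mu p t) (rew p R))"
  by (simp add: J_def ex_def rew_def)

lemma ex_lin: "ex (state_dist P mu p t) f = (\<Sum>s0\<in>UNIV. mu s0 * ex (state_dist P (dlt s0) p t) f)"
proof -
  have "ex (state_dist P mu p t) f = (\<Sum>s\<in>UNIV. (\<Sum>s0\<in>UNIV. mu s0 * state_dist P (dlt s0) p t s) * f s)"
    unfolding ex_def by (simp only: sd_lin[of P mu p t])
  also have "\<dots> = (\<Sum>s\<in>UNIV. \<Sum>s0\<in>UNIV. mu s0 * state_dist P (dlt s0) p t s * f s)"
    by (simp only: sum_distrib_right)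
  also have "\<dots> = (\<Sum>s0\<in>UNIV. \<Sum>s\<in>UNIV. mu s0 * state_dist P (dlt s0) p t s * f s)"
    by (rule sum.swap)
  also have "\<dots> = (\<Sum>s0\<in>UNIV. mu s0 * ex (state_dist P (dlt s0) p t) f)"
    unfolding ex_def by (simp only: sum_distrib_left mult.assoc)
  finally show ?thesis .
qed

locale mdp =
  fixes P :: "'s::finite \<Rightarrow> 'a::finite \<Rightarrow> 's \<Rightarrow> real" and \<gamma> :: real
  assumes trans: "is_transition P" and g0: "0 \<le> \<gamma>" and g1: "\<gamma> < 1"
begin

lemma summ_dist:
  assumes "is_policy p" "is_distribution mu" "\<And>s. \<bar>f s\<bar> \<le> B"
  shows "summable (\<lambda>t. \<gamma>^t * ex (state_dist P mu p t) f)"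
  by (rule geo_summable[OF g0 g1 ex_bound[OF sd_dist[OF trans assms(1,2)] assms(3)]])

lemma summ_gen:
  assumes "is_policy p" "\<And>s. \<bar>f s\<bar> \<le> B"
  shows "summable (\<lambda>t. \<gamma>^t * ex (state_dist P mu p t) f)"
proof -
  have "summable (\<lambda>t. \<Sum>s0\<in>UNIV. mu s0 * (\<gamma>^t * ex (state_dist P (dlt s0) p t) f))"
    by (intro summable_sum summable_mult summ_dist[OF assms(1) dlt_dist assms(2)])
  moreover have "(\<lambda>t. \<Sum>s0\<in>UNIV. mu s0 * (\<gamma>^t * ex (state_dist P (dlt s0) p t) f))
      = (\<lambda>t. \<gamma>^t * ex (state_dist P mu p t) f)"
    by (subst ex_lin) (simp add: sum_distrib_left mult.left_commute)
  ultimately show ?thesis by simp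
qed

lemma ser_lin:
  assumes "is_policy p" "\<And>s. \<bar>f s\<bar> \<le> B"
  shows "(\<Sum>t. \<gamma>^t * ex (state_dist P mu p t) f) = (\<Sum>s0\<in>UNIV. mu s0 * (\<Sum>t. \<gamma>^t * ex (state_dist P (dlt s0) p t) f))"
proof -
  have "(\<lambda>t. \<gamma>^t * ex (state_dist P mu p t) f) = (\<lambda>t. \<Sum>s0\<in>UNIV. mu s0 * (\<gamma>^t * ex (state_dist P (dlt s0) p t) f))"
    by (subst ex_lin) (simp add: sum_distrib_left mult.left_commute)
  hence "(\<Sum>t. \<gamma>^t * ex (state_dist P mu p t) f) = (\<Sum>t. \<Sum>s0\<in>UNIV. mu s0 * (\<gamma>^t * ex (state_dist P (dlt s0) p t) f))"
    by simp
  also have "\<dots> = (\<Sum>s0\<in>UNIV. \<Sum>t. mu s0 * (\<gamma>^t * ex (state_dist P (dlt s0) p t) f))"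
    by (intro suminf_sum summable_mult summ_dist[OF assms(1) dlt_dist assms(2)])
  also have "\<dots> = (\<Sum>s0\<in>UNIV. mu s0 * (\<Sum>t. \<gamma>^t * ex (state_dist P (dlt s0) p t) f))"
    by (intro sum.cong refl suminf_mult summ_dist[OF assms(1) dlt_dist assms(2)])
  finally show ?thesis .
qed

lemma J_lin:
  assumes "is_policy p"
  shows "J P mu R \<gamma> p = (\<Sum>s0\<in>UNIV. mu s0 * J P (dlt s0) R \<gamma> p)"
proof -
  have b: "\<And>s. \<bar>rew p R s\<bar> \<le> Rmax R" by (rule rew_bound[OF assms])
  have "J P mu R \<gamma> p = (\<Sum>t. \<gamma>^t * ex (state_dist P mu p t) (rew p R))" by (rule J_alt)
  also have "\<dots> = (\<Sum>s0\<in>UNIV. mu s0 * (\<Sum>t. \<gamma>^t * ex (state_dist P (dlt s0) p t) (rew p R)))"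
    by (rule ser_lin[of p "rew p R" "Rmax R" mu, OF assms b])
  also have "\<dots> = (\<Sum>s0\<in>UNIV. mu s0 * J P (dlt s0) R \<gamma> p)" by (simp only: J_alt)
  finally show ?thesis .
qed

lemma J_Suc:
  assumes "is_policy p"
  shows "J P mu R \<gamma> p = ex mu (rew p R) + \<gamma> * J P (stp P p mu) R \<gamma> p"
proof -
  let ?f = "\<lambda>t. \<gamma>^t * ex (state_dist P mu p t) (rew p R)"
  have s: "summable ?f" by (rule summ_gen[OF assms rew_bound[OF assms]])
  have "(\<Sum>n. ?f (Suc n)) = (\<Sum>n. \<gamma> * (\<gamma>^n * ex (state_dist P (stp P p mu) p n) (rew p R)))"
    by (simp only: sd_Suc' power_Suc mult.assoc)
  also have "\<dots> = \<gamma> * J P (stp P p mu) R \<gamma> p"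
    unfolding J_alt by (intro suminf_mult summ_gen[OF assms rew_bound[OF assms]])
  finally have "\<gamma> * J P (stp P p mu) R \<gamma> p = suminf ?f - ?f 0" using suminf_split_head[OF s] by simp
  thus ?thesis unfolding J_alt by simp
qed

lemma J_bound:
  assumes "is_policy p" "is_distribution mu"
  shows "\<bar>J P mu R \<gamma> p\<bar> \<le> Rmax R / (1 - \<gamma>)"
proof -
  let ?f = "\<lambda>t. \<gamma>^t * ex (state_dist P mu p t) (rew p R)"
  have s: "summable ?f" by (rule summ_dist[OF assms rew_bound[OF assms(1)]])
  have gs: "(\<lambda>t. Rmax R * \<gamma>^t) sums (Rmax R * (1 / (1 - \<gamma>)))"
    using g0 g1 by (intro sums_mult geometric_sums) auto
  have b: "\<bar>?f t\<bar> \<le> Rmax R * \<gamma>^t" for t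
  proof -
    have "\<bar>ex (state_dist P mu p t) (rew p R)\<bar> \<le> Rmax R"
      by (rule ex_bound[OF sd_dist[OF trans assms(1,2)] rew_bound[OF assms(1)]])
    hence "\<gamma>^t * \<bar>ex (state_dist P mu p t) (rew p R)\<bar> \<le> \<gamma>^t * Rmax R" using g0 by (intro mult_left_mono) auto
    thus ?thesis using g0 by (simp add: abs_mult mult.commute)
  qed
  have "suminf ?f \<le> Rmax R * (1 / (1 - \<gamma>))"
    by (rule sums_le[OF _ summable_sums[OF s] gs]) (rule abs_le_D1[OF b])
  moreover have "- suminf ?f \<le> Rmax R * (1 / (1 - \<gamma>))"
    by (rule sums_le[OF _ sums_minus[OF summable_sums[OF s]] gs]) (rule abs_le_D2[OF b])
  ultimately show ?thesis unfolding J_alt by simp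
qed

end



lemma ex_dlt: "ex (dlt s) f = f s"
proof -
  have "ex (dlt s) f = (\<Sum>s'\<in>UNIV. if s' = s then f s else 0)"
    unfolding ex_def by (intro sum.cong) (auto simp: dlt_def)
  thus ?thesis by simp
qed

lemma stp_dlt: "stp P p (dlt s) s1 = (\<Sum>a\<in>UNIV. p s a * P s a s1)"
proof -
  have "stp P p (dlt s) s1 = (\<Sum>s'\<in>UNIV. if s' = s then (\<Sum>a\<in>UNIV. p s a * P s a s1) else 0)"
    unfolding stp_def by (intro sum.cong) (auto simp: dlt_def)
  thus ?thesis by simp
qed

lemma ex_diff: "ex d (\<lambda>s. f s - g s) = ex d f - ex d g"
  unfolding ex_def by (simp add: right_diff_distrib sum_subtractf)

lemma ex_add: "ex d (\<lambda>s. f s + g s) = ex d f + ex d g"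
  unfolding ex_def by (simp add: distrib_left sum.distrib)

lemma ex_cmult: "ex d (\<lambda>s. c * f s) = c * ex d f"
  unfolding ex_def by (simp add: sum_distrib_left mult.left_commute)

lemma ex_abs_le:
  assumes "is_distribution d" "\<And>s. \<bar>f s\<bar> \<le> k s"
  shows "\<bar>ex d f\<bar> \<le> ex d k"
proof -
  have "\<bar>ex d f\<bar> \<le> (\<Sum>s\<in>UNIV. \<bar>d s * f s\<bar>)" unfolding ex_def by (rule sum_abs)
  also have "\<dots> \<le> (\<Sum>s\<in>UNIV. d s * k s)"
    using assms by (intro sum_mono) (auto simp: is_distribution_def abs_mult intro: mult_left_mono)
  finally show ?thesis unfolding ex_def .
qed

lemma dist_le1: "is_distribution d \<Longrightarrow> \<bar>d s\<bar> \<le> 1"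
  unfolding is_distribution_def
  using member_le_sum[of s UNIV d] by auto

lemma aux_div: "(x::real) \<noteq> 0 \<Longrightarrow> r / x * S = r / x^2 * (x * S)"
  by (simp add: field_simps power2_eq_square)

lemma swap3:
  fixes d :: "'s::finite \<Rightarrow> real" and q :: "'s \<Rightarrow> 'a::finite \<Rightarrow> real" and P :: "'s \<Rightarrow> 'a \<Rightarrow> 's \<Rightarrow> real"
  shows "(\<Sum>s1\<in>UNIV. (\<Sum>s\<in>UNIV. d s * (\<Sum>a\<in>UNIV. q s a * P s a s1)) * V s1)
       = (\<Sum>s\<in>UNIV. d s * (\<Sum>a\<in>UNIV. q s a * (\<Sum>s1\<in>UNIV. P s a s1 * V s1)))"
proof -
  have "(\<Sum>s1\<in>UNIV. (\<Sum>s\<in>UNIV. d s * (\<Sum>a\<in>UNIV. q s a * P s a s1)) * V s1)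
      = (\<Sum>s1\<in>UNIV. \<Sum>s\<in>UNIV. \<Sum>a\<in>UNIV. d s * q s a * P s a s1 * V s1)"
    by (simp only: sum_distrib_right sum_distrib_left mult.assoc)
  also have "\<dots> = (\<Sum>s\<in>UNIV. \<Sum>s1\<in>UNIV. \<Sum>a\<in>UNIV. d s * q s a * P s a s1 * V s1)"
    by (rule sum.swap)
  also have "\<dots> = (\<Sum>s\<in>UNIV. \<Sum>a\<in>UNIV. \<Sum>s1\<in>UNIV. d s * q s a * P s a s1 * V s1)"
    by (rule sum.cong[OF refl], rule sum.swap)
  also have "\<dots> = (\<Sum>s\<in>UNIV. d s * (\<Sum>a\<in>UNIV. q s a * (\<Sum>s1\<in>UNIV. P s a s1 * V s1)))"
    by (simp only: sum_distrib_right sum_distrib_left mult.assoc)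
  finally show ?thesis .
qed

context mdp
begin

lemma pd_bound:
  fixes R :: "'s \<Rightarrow> 'a \<Rightarrow> real"
  assumes pa: "is_policy pa" and pp: "is_policy pp" and mu: "is_distribution mu"
  shows "\<bar>J P mu R \<gamma> pa - J P mu R \<gamma> pp\<bar>
     \<le> Rmax R / (1 - \<gamma>)^2 * (\<Sum>s\<in>UNIV. visit P mu \<gamma> pa s * (\<Sum>a\<in>UNIV. \<bar>pa s a - pp s a\<bar>))"
proof -
  define V where "V s = J P (dlt s) R \<gamma> pp" for s
  define Q where "Q s a = R s a + \<gamma> * (\<Sum>s1\<in>UNIV. P s a s1 * V s1)" for s a
  define C where "C = Rmax R / (1 - \<gamma>)"
  define h where "h s = (\<Sum>a\<in>UNIV. \<bar>pa s a - pp s a\<bar>)" for s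
  define g where "g s = (\<Sum>a\<in>UNIV. pa s a * Q s a) - V s" for s
  define d where "d t = state_dist P mu pa t" for t
  have g1': "1 - \<gamma> > 0" using g1 by simp
  have Rm0: "0 \<le> Rmax R" using Rmax_ge[of R] by (meson abs_ge_zero order_trans)
  have C0: "0 \<le> C" unfolding C_def using Rm0 g1' by simp
  have ddist: "is_distribution (d t)" for t unfolding d_def by (rule sd_dist[OF trans pa mu])
  have bell: "V s = (\<Sum>a\<in>UNIV. pp s a * Q s a)" for s
  proof -
    have "V s = rew pp R s + \<gamma> * (\<Sum>s1\<in>UNIV. stp P pp (dlt s) s1 * V s1)"
      unfolding V_def by (subst J_Suc[OF pp], subst J_lin[OF pp]) (simp add: ex_dlt)
    also have "\<dots> = rew pp R s + \<gamma> * (\<Sum>s1\<in>UNIV. (\<Sum>s'\<in>UNIV. dlt s s' * (\<Sum>a\<in>UNIV. pp s' a * P s' a s1)) * V s1)"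
      unfolding stp_def by simp
    also have "\<dots> = rew pp R s + \<gamma> * (\<Sum>s'\<in>UNIV. dlt s s' * (\<Sum>a\<in>UNIV. pp s' a * (\<Sum>s1\<in>UNIV. P s' a s1 * V s1)))"
      by (simp only: swap3)
    also have "\<dots> = rew pp R s + \<gamma> * (\<Sum>a\<in>UNIV. pp s a * (\<Sum>s1\<in>UNIV. P s a s1 * V s1))"
      using ex_dlt[of s "\<lambda>s'. (\<Sum>a\<in>UNIV. pp s' a * (\<Sum>s1\<in>UNIV. P s' a s1 * V s1))"]
      unfolding ex_def by simp
    also have "\<dots> = (\<Sum>a\<in>UNIV. pp s a * Q s a)"
      unfolding Q_def rew_def by (simp add: distrib_left sum.distrib sum_distrib_left mult.left_commute)
    finally show ?thesis .
  qed
  have Vb: "\<bar>V s\<bar> \<le> C" for s unfolding V_def C_def by (rule J_bound[OF pp dlt_dist])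
  have Qb: "\<bar>Q s a\<bar> \<le> C" for s a
  proof -
    have dP: "is_distribution (P s a)" using trans by (simp add: is_transition_def)
    have "\<bar>\<Sum>s1\<in>UNIV. P s a s1 * V s1\<bar> \<le> C" using ex_bound[OF dP Vb] by (simp add: ex_def)
    hence "\<bar>\<gamma> * (\<Sum>s1\<in>UNIV. P s a s1 * V s1)\<bar> \<le> \<gamma> * C" using g0 by (simp add: abs_mult mult_left_mono)
    hence "\<bar>Q s a\<bar> \<le> Rmax R + \<gamma> * C" unfolding Q_def using Rmax_ge[of R s a] by linarith
    also have "Rmax R + \<gamma> * C = C" unfolding C_def using g1' by (simp add: field_simps)
    finally show ?thesis .
  qed
  have gb: "\<bar>g s\<bar> \<le> C * h s" for s
  proof -
    have "g s = (\<Sum>a\<in>UNIV. (pa s a - pp s a) * Q s a)"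
      unfolding g_def bell by (simp add: left_diff_distrib sum_subtractf)
    hence "\<bar>g s\<bar> \<le> (\<Sum>a\<in>UNIV. \<bar>(pa s a - pp s a) * Q s a\<bar>)" by (simp add: sum_abs)
    also have "\<dots> \<le> (\<Sum>a\<in>UNIV. \<bar>pa s a - pp s a\<bar> * C)"
      by (intro sum_mono) (simp add: abs_mult Qb mult_left_mono)
    finally show ?thesis unfolding h_def by (simp add: sum_distrib_left mult.commute)
  qed
  have hb: "\<bar>h s\<bar> \<le> 2" for s
  proof -
    have "h s \<le> (\<Sum>a\<in>UNIV. pa s a + pp s a)"
    proof -
      have n1: "0 \<le> pa s a" "0 \<le> pp s a" for a using pa pp by (auto simp: is_policy_def is_distribution_def)
      show ?thesis unfolding h_def
      proof (intro sum_mono)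
        fix a show "\<bar>pa s a - pp s a\<bar> \<le> pa s a + pp s a" using n1[of a] by linarith
      qed
    qed
    also have "\<dots> = 2" using pa pp by (simp add: sum.distrib is_policy_def is_distribution_def)
    finally show ?thesis unfolding h_def by simp
  qed
  have step: "ex D (\<lambda>s. \<Sum>a\<in>UNIV. pa s a * Q s a) = ex D (rew pa R) + \<gamma> * ex (stp P pa D) V" for D
  proof -
    have e: "(\<lambda>s. \<Sum>a\<in>UNIV. pa s a * Q s a) = (\<lambda>s. rew pa R s + \<gamma> * (\<Sum>a\<in>UNIV. pa s a * (\<Sum>s1\<in>UNIV. P s a s1 * V s1)))"
      unfolding Q_def rew_def by (simp add: distrib_left sum.distrib sum_distrib_left mult.left_commute)
    have "ex (stp P pa D) V = ex D (\<lambda>s. \<Sum>a\<in>UNIV. pa s a * (\<Sum>s1\<in>UNIV. P s a s1 * V s1))"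
      unfolding ex_def stp_def by (rule swap3)
    thus ?thesis unfolding e ex_add ex_cmult by simp
  qed
  define F where "F t = \<gamma>^t * ex (d t) V" for t
  have term_eq: "\<gamma>^t * ex (d t) g = \<gamma>^t * ex (d t) (rew pa R) + (F (Suc t) - F t)" for t
  proof -
    have e: "ex (d t) g = ex (d t) (rew pa R) + \<gamma> * ex (d (Suc t)) V - ex (d t) V"
      unfolding g_def ex_diff step d_def sd_Suc by simp
    show ?thesis unfolding F_def e power_Suc by (simp only: algebra_simps)
  qed
  have s1: "(\<lambda>t. \<gamma>^t * ex (d t) (rew pa R)) sums J P mu R \<gamma> pa"
    unfolding J_alt d_def by (rule summable_sums[OF summ_dist[OF pa mu rew_bound[OF pa]]])
  have Fs: "summable F" unfolding F_def d_def by (rule summ_dist[OF pa mu Vb])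
  have s2: "(\<lambda>t. F (Suc t) - F t) sums (0 - F 0)"
    by (rule telescope_sums[OF summable_LIMSEQ_zero[OF Fs]])
  have F0: "F 0 = J P mu R \<gamma> pp"
    unfolding F_def d_def V_def by (simp add: J_lin[OF pp, of mu R] ex_def)
  have main_sums: "(\<lambda>t. \<gamma>^t * ex (d t) g) sums (J P mu R \<gamma> pa - J P mu R \<gamma> pp)"
    using sums_add[OF s1 s2] unfolding term_eq F0 by simp
  define S where "S = (\<Sum>t. \<gamma>^t * ex (d t) h)"
  have hs: "summable (\<lambda>t. \<gamma>^t * ex (d t) h)" unfolding d_def by (rule summ_dist[OF pa mu hb])
  have bs: "(\<lambda>t. C * (\<gamma>^t * ex (d t) h)) sums (C * S)" unfolding S_def
    by (rule sums_mult[OF summable_sums[OF hs]])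
  have tb: "\<bar>\<gamma>^t * ex (d t) g\<bar> \<le> C * (\<gamma>^t * ex (d t) h)" for t
  proof -
    have "\<bar>ex (d t) g\<bar> \<le> ex (d t) (\<lambda>s. C * h s)" by (rule ex_abs_le[OF ddist gb])
    hence "\<bar>ex (d t) g\<bar> \<le> C * ex (d t) h" by (simp add: ex_cmult)
    hence "\<gamma>^t * \<bar>ex (d t) g\<bar> \<le> \<gamma>^t * (C * ex (d t) h)" using g0 by (intro mult_left_mono) auto
    thus ?thesis using g0 by (simp add: abs_mult mult.left_commute)
  qed
  have up: "J P mu R \<gamma> pa - J P mu R \<gamma> pp \<le> C * S"
    by (rule sums_le[OF _ main_sums bs]) (rule abs_le_D1[OF tb])
  have lo: "- (J P mu R \<gamma> pa - J P mu R \<gamma> pp) \<le> C * S"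
    by (rule sums_le[OF _ sums_minus[OF main_sums] bs]) (rule abs_le_D2[OF tb])
  have vs: "(\<Sum>s\<in>UNIV. visit P mu \<gamma> pa s * h s) = (1 - \<gamma>) * S"
  proof -
    have sm: "summable (\<lambda>t. \<gamma>^t * d t s)" for s
      by (rule geo_summable[OF g0 g1 dist_le1[OF ddist]])
    have "(\<Sum>s\<in>UNIV. visit P mu \<gamma> pa s * h s) = (\<Sum>s\<in>UNIV. (1 - \<gamma>) * ((\<Sum>t. \<gamma>^t * d t s) * h s))"
      unfolding visit_def d_def by (simp add: mult.assoc)
    also have "\<dots> = (1 - \<gamma>) * (\<Sum>s\<in>UNIV. (\<Sum>t. \<gamma>^t * d t s * h s))"
      by (simp add: sum_distrib_left suminf_mult2[OF sm])
    also have "(\<Sum>s\<in>UNIV. (\<Sum>t. \<gamma>^t * d t s * h s)) = (\<Sum>t. \<Sum>s\<in>UNIV. \<gamma>^t * d t s * h s)"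
      by (rule suminf_sum[symmetric]) (rule summable_mult2[OF sm])
    also have "\<dots> = S" unfolding S_def ex_def
      by (simp add: sum_distrib_left mult.assoc)
    finally show ?thesis .
  qed
  have "\<bar>J P mu R \<gamma> pa - J P mu R \<gamma> pp\<bar> \<le> C * S" using up lo by linarith
  also have "C * S = Rmax R / (1 - \<gamma>)^2 * (\<Sum>s\<in>UNIV. visit P mu \<gamma> pa s * h s)"
    unfolding vs C_def using aux_div[of "1 - \<gamma>" "Rmax R" S] g1' by simp
  finally show ?thesis unfolding h_def .
qed

end

theorem theoremA4:
  fixes P :: "'s::finite \<Rightarrow> 'a::finite \<Rightarrow> 's \<Rightarrow> real"
    and mu :: "'s \<Rightarrow> real"
    and R :: "'s \<Rightarrow> 'a \<Rightarrow> real"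
    and \<gamma> :: real
    and pih piav pistar :: "'s \<Rightarrow> 'a \<Rightarrow> real"
    and T :: "'s \<Rightarrow> real"
  assumes trans: "is_transition P"
    and init: "is_distribution mu"
    and gamma: "0 < \<gamma>" "\<gamma> < 1"
    and pol_h: "is_policy pih"
    and pol_av: "is_policy piav"
    and switch: "\<forall>s. T s \<in> {0, 1}"
    and opt: "is_policy pistar"
             "\<forall>p. is_policy p \<longrightarrow> J P mu R \<gamma> p \<le> J P mu R \<gamma> pistar"
    and pos: "(\<Sum>s\<in>UNIV. visit P mu \<gamma> (mix_policy T pih piav) s
                 * (\<Sum>a\<in>UNIV. \<bar>pih s a - piav s a\<bar>)) > 0"
  shows
    "let pimix = mix_policy T pih piav;
         D = (\<Sum>s\<in>UNIV. visit P mu \<gamma> pimix s * (\<Sum>a\<in>UNIV. \<bar>pih s a - piav s a\<bar>));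
         \<beta> = (\<Sum>s\<in>UNIV. visit P mu \<gamma> pimix s * (\<Sum>a\<in>UNIV. \<bar>T s * (pih s a - piav s a)\<bar>)) / D
     in \<bar>J P mu R \<gamma> pistar - J P mu R \<gamma> piav\<bar>
          \<le> \<beta> * Rmax R / (1 - \<gamma>)^2 * D + \<bar>J P mu R \<gamma> pistar - J P mu R \<gamma> pimix\<bar>"
proof -
  interpret mdp P \<gamma> using trans gamma by unfold_locales auto
  define pm where "pm = mix_policy T pih piav"
  define D where "D = (\<Sum>s\<in>UNIV. visit P mu \<gamma> pm s * (\<Sum>a\<in>UNIV. \<bar>pih s a - piav s a\<bar>))"
  define N where "N = (\<Sum>s\<in>UNIV. visit P mu \<gamma> pm s * (\<Sum>a\<in>UNIV. \<bar>T s * (pih s a - piav s a)\<bar>))"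
  have Dpos: "D > 0" using pos unfolding D_def pm_def .
  have polm: "is_policy pm"
    unfolding is_policy_def
  proof
    fix s
    have "T s = 0 \<or> T s = 1" using switch by auto
    then show "is_distribution (pm s)"
    proof
      assume "T s = 0"
      hence "pm s = piav s" unfolding pm_def mix_policy_def by auto
      thus ?thesis using pol_av by (simp add: is_policy_def)
    next
      assume "T s = 1"
      hence "pm s = pih s" unfolding pm_def mix_policy_def by auto
      thus ?thesis using pol_h by (simp add: is_policy_def)
    qed
  qed
  have diff: "pm s a - piav s a = T s * (pih s a - piav s a)" for s a
    unfolding pm_def mix_policy_def by (simp add: algebra_simps)
  have pd: "\<bar>J P mu R \<gamma> pm - J P mu R \<gamma> piav\<bar> \<le> Rmax R / (1 - \<gamma>)^2 * N"
    using pd_bound[OF polm pol_av init, of R] unfolding N_def diff .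
  have "N / D * Rmax R / (1 - \<gamma>)^2 * D = Rmax R / (1 - \<gamma>)^2 * N" using Dpos by simp
  moreover have "\<bar>J P mu R \<gamma> pistar - J P mu R \<gamma> piav\<bar>
      \<le> \<bar>J P mu R \<gamma> pistar - J P mu R \<gamma> pm\<bar> + \<bar>J P mu R \<gamma> pm - J P mu R \<gamma> piav\<bar>" by linarith
  ultimately have "\<bar>J P mu R \<gamma> pistar - J P mu R \<gamma> piav\<bar>
      \<le> N / D * Rmax R / (1 - \<gamma>)^2 * D + \<bar>J P mu R \<gamma> pistar - J P mu R \<gamma> pm\<bar>" using pd by linarith
  thus ?thesis unfolding Let_def pm_def[symmetric] D_def[symmetric] N_def[symmetric] .
qed

end
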